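(* With the setting in the context, for $[f]\in H^0(C,G)$ define $$Q^{[f]}=\frac{1}{|\widehat{H^0(C,G)}|}\sum_{\rho\in\widehat{H^0(C,G)}}\overline{\rho([f])}\,Q_{m_\rho}.$$ Then for every $g\in\ker(\delta^0)$, $Q^{[f]}\mathcal A_0|g\rangle=\delta([f],[g])\,\mathcal A_0|g\rangle$, where $\delta(\cdot,\cdot)$ is the Kronecker delta on $H^0(C,G)$.
   Context: $(C_\bullet,\partial^C_\bullet)$ is a chain complex with each $C_n$ free abelian on a finite set $K_n$, $K_n\ne\emptyset$ for finitely many $n$; $(G_\bullet,\partial^G_\bullet)$ is a chain complex of finite abelian groups. $\mathrm{hom}(C,G)^p=\prod_n\mathrm{Hom}(C_n,G_{n-p})$ with $(\delta^pf)_n=f_{n-1}\partial^C_n-(-1)^p\partial^G_{n-p}f_n$, and $H^0(C,G)=\ker\delta^0/\mathrm{im}\,\delta^{-1}$, with character group $\widehat{H^0(C,G)}=\mathrm{Hom}(H^0(C,G),U(1))$. $\mathrm{hom}(C,G)_0=\mathrm{Hom}(\mathrm{hom}(C,G)^0,U(1))$. $\mathcal H=\bigotimes_n\bigotimes_{x\in K_n}\mathbb C[G_n]$ with orthonormal basis $|f\rangle$, $f\in\mathrm{hom}(C,G)^0$; $Q_m|f\rangle=m(f)|f\rangle$ for $m\in\mathrm{hom}(C,G)_0$; $P_t|f\rangle=|f+t\rangle$; $\mathcal A_0=\frac1{|\mathrm{hom}(C,G)^{-1}|}\sum_{t\in\mathrm{hom}(C,G)^{-1}}P_{\delta^{-1}t}$.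 For each $\rho\in\widehat{H^0(C,G)}$, $m_\rho\in\mathrm{hom}(C,G)_0$ denotes any character with $m_\rho\circ\delta^{-1}$ trivial and $m_\rho(f)=\rho([f])$ for all $f\in\ker\delta^0$ (such characters exist, and $Q_{m_\rho}$ restricted to the span of the vectors $\mathcal A_0|g\rangle$, $g\in\ker\delta^0$, does not depend on the choice). *)

theory Defs
  imports Complex_Main
begin

text \<open>Cochains in degree p: an element of hom(C,G)^p = prod_n Hom(C_n, G_(n-p)).
  Since C_n is free abelian on the finite set K n, a homomorphism C_n -> G_(n-p) is
  the same as a function K n -> G (n-p).  All groups G_n are subgroups (carriers) of a
  common ambient abelian group of type 'g.  Cochains are represented extensionally
  (value 0 outside K n).\<close>

type_synonym ('c, 'g) cochain = "int \<Rightarrow> 'c \<Rightarrow> 'g"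

fun nmul :: "nat \<Rightarrow> 'g::ab_group_add \<Rightarrow> 'g" where
  "nmul 0 a = 0"
| "nmul (Suc k) a = a + nmul k a"

definition zmul :: "int \<Rightarrow> 'g::ab_group_add \<Rightarrow> 'g" where
  "zmul k a = (if 0 \<le> k then nmul (nat k) a else - nmul (nat (- k)) a)"

definition cochains :: "(int \<Rightarrow> 'c set) \<Rightarrow> (int \<Rightarrow> 'g::zero set) \<Rightarrow> int \<Rightarrow> ('c, 'g) cochain set" where
  "cochains K G p = {f. \<forall>n x. (x \<in> K n \<longrightarrow> f n x \<in> G (n - p)) \<and> (x \<notin> K n \<longrightarrow> f n x = 0)}"

definition cadd :: "('c, 'g::ab_group_add) cochain \<Rightarrow> ('c, 'g) cochain \<Rightarrow> ('c, 'g) cochain" where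
  "cadd f t = (\<lambda>n x. f n x + t n x)"

definition csub :: "('c, 'g::ab_group_add) cochain \<Rightarrow> ('c, 'g) cochain \<Rightarrow> ('c, 'g) cochain" where
  "csub f t = (\<lambda>n x. f n x - t n x)"

text \<open>The boundary of C: for x in K n, \<partial>x = sum over y in K (n-1) of dC n x y * y.
  Coboundary: (delta p f)_n = f_(n-1) \<circ> \<partial>^C_n - (-1)^p \<partial>^G_(n-p) \<circ> f_n.\<close>
definition delta :: "(int \<Rightarrow> 'c set) \<Rightarrow> (int \<Rightarrow> 'c \<Rightarrow> 'c \<Rightarrow> int) \<Rightarrow> (int \<Rightarrow> 'g \<Rightarrow> 'g)
    \<Rightarrow> int \<Rightarrow> ('c, 'g::ab_group_add) cochain \<Rightarrow> ('c, 'g) cochain" where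
  "delta K dC dG p f = (\<lambda>n x. if x \<in> K n then
      (\<Sum>y\<in>K (n - 1). zmul (dC n x y) (f (n - 1) y))
      - (if even p then dG (n - p) (f n x) else - dG (n - p) (f n x))
    else 0)"

definition cocycles0 where
  "cocycles0 K dC G dG = {f \<in> cochains K G 0. delta K dC dG 0 f = (\<lambda>n x. 0)}"

definition coboundaries0 where
  "coboundaries0 K dC G dG = delta K dC dG (-1) ` cochains K G (-1)"

definition cls where
  "cls K dC G dG f = {cadd f b | b. b \<in> coboundaries0 K dC G dG}"

definition H0 where
  "H0 K dC G dG = cls K dC G dG ` cocycles0 K dC G dG"

text \<open>Character group of H^0: homomorphisms H^0 -> U(1), as functions on the set of
  classes, extended by 0 outside H^0.  The group law of H^0 is [a]+[b] = [a+b].\<close>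
definition H0_chars :: "(int \<Rightarrow> 'c set) \<Rightarrow> (int \<Rightarrow> 'c \<Rightarrow> 'c \<Rightarrow> int) \<Rightarrow> (int \<Rightarrow> 'g::ab_group_add set)
    \<Rightarrow> (int \<Rightarrow> 'g \<Rightarrow> 'g) \<Rightarrow> (('c, 'g) cochain set \<Rightarrow> complex) set" where
  "H0_chars K dC G dG = {\<rho>. (\<forall>X. X \<notin> H0 K dC G dG \<longrightarrow> \<rho> X = 0)
     \<and> (\<forall>a\<in>cocycles0 K dC G dG. \<forall>b\<in>cocycles0 K dC G dG.
          \<rho> (cls K dC G dG (cadd a b)) = \<rho> (cls K dC G dG a) * \<rho> (cls K dC G dG b))
     \<and> (\<forall>a\<in>cocycles0 K dC G dG. norm (\<rho> (cls K dC G dG a)) = 1)}"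

definition hom0_chars :: "(int \<Rightarrow> 'c set) \<Rightarrow> (int \<Rightarrow> 'g::ab_group_add set)
    \<Rightarrow> (('c, 'g) cochain \<Rightarrow> complex) set" where
  "hom0_chars K G = {m. (\<forall>a\<in>cochains K G 0. \<forall>b\<in>cochains K G 0. m (cadd a b) = m a * m b)
     \<and> (\<forall>a\<in>cochains K G 0. norm (m a) = 1)}"

text \<open>Vectors of H = functions hom(C,G)^0 -> C (coefficients in the basis |f>).\<close>
definition ket :: "('c, 'g) cochain \<Rightarrow> ('c, 'g) cochain \<Rightarrow> complex" where
  "ket f = (\<lambda>h. if h = f then 1 else 0)"

definition Qop :: "(('c, 'g) cochain \<Rightarrow> complex) \<Rightarrow> (('c, 'g) cochain \<Rightarrow> complex) \<Rightarrow> ('c, 'g) cochain \<Rightarrow> complex" where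
  "Qop m \<psi> = (\<lambda>h. m h * \<psi> h)"

text \<open>P_t |f> = |f + t>.\<close>
definition Pop :: "('c, 'g::ab_group_add) cochain \<Rightarrow> (('c, 'g) cochain \<Rightarrow> complex) \<Rightarrow> ('c, 'g) cochain \<Rightarrow> complex" where
  "Pop t \<psi> = (\<lambda>h. \<psi> (csub h t))"

definition A0 where
  "A0 K dC G dG \<psi> = (\<lambda>h. (\<Sum>t\<in>cochains K G (-1). Pop (delta K dC dG (-1) t) \<psi> h)
                          / of_nat (card (cochains K G (-1))))"

definition Qclass where
  "Qclass K dC G dG mrho f \<psi> = (\<lambda>h. (\<Sum>\<rho>\<in>H0_chars K dC G dG.
        cnj (\<rho> (cls K dC G dG f)) * Qop (mrho \<rho>) \<psi> h)
      / of_nat (card (H0_chars K dC G dG)))"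

end

theory Submission
  imports Defs "HOL-Library.Function_Algebras" "HOL-Library.FuncSet"
begin


definition sgrp :: "'a::ab_group_add set \<Rightarrow> bool" where
  "sgrp H \<longleftrightarrow> 0 \<in> H \<and> (\<forall>x\<in>H. \<forall>y\<in>H. x + y \<in> H) \<and> (\<forall>x\<in>H. - x \<in> H)"

definition chr :: "'a::ab_group_add set \<Rightarrow> ('a \<Rightarrow> complex) \<Rightarrow> bool" where
  "chr H \<chi> \<longleftrightarrow> (\<forall>x\<in>H. \<forall>y\<in>H. \<chi> (x + y) = \<chi> x * \<chi> y) \<and> (\<forall>x\<in>H. norm (\<chi> x) = 1)"

lemma nmul_add: "nmul (i + j) a = nmul i a + nmul j a"
  by (induct i) (simp_all add: add.assoc)

lemma nmul_mult: "nmul (i * j) a = nmul i (nmul j a)"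
  by (induct i) (simp_all add: nmul_add)

lemma nmul_zero[simp]: "nmul i 0 = 0"
  by (induct i) simp_all

lemma nmul_one[simp]: "nmul (Suc 0) a = a"
  by simp

lemma nmul_plus: "nmul i (a + b) = nmul i a + nmul i b"
  by (induct i) (simp_all add: algebra_simps)

lemma nmul_uminus: "nmul i (- a) = - nmul i a"
  by (induct i) (simp_all add: algebra_simps)

lemma nmul_mem: "sgrp H \<Longrightarrow> a \<in> H \<Longrightarrow> nmul i a \<in> H"
  by (induct i) (auto simp: sgrp_def)

lemma sgrp_diff: "sgrp H \<Longrightarrow> a \<in> H \<Longrightarrow> b \<in> H \<Longrightarrow> a - b \<in> H"
  unfolding sgrp_def by (metis diff_conv_add_uminus)

lemma order_ex:
  assumes "finite H" "sgrp H" "a \<in> H"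
  shows "\<exists>n>0. nmul n a = 0"
proof -
  have "\<not> inj_on (\<lambda>i. nmul i a) {..card H}"
  proof
    assume inj: "inj_on (\<lambda>i. nmul i a) {..card H}"
    have "(\<lambda>i. nmul i a) ` {..card H} \<subseteq> H" using nmul_mem assms by blast
    from card_inj_on_le[OF inj this assms(1)] show False by simp
  qed
  then obtain i j where ij: "i \<noteq> j" "nmul i a = nmul j a"
    unfolding inj_on_def by blast
  { fix i j :: nat assume "i < j" "nmul i a = nmul j a"
    then have "nmul (j - i) a + nmul i a = nmul i a"
      by (metis le_add_diff_inverse2 less_imp_le nmul_add)
    then have "nmul (j - i) a = 0" by simp
    then have "\<exists>n>0. nmul n a = 0" using \<open>i < j\<close> by (intro exI[of _ "j - i"]) simp }
  note * = this
  show ?thesis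
    using ij *[of i j] *[of j i] by (cases "i < j") auto
qed

lemma chr_zero: "chr H \<chi> \<Longrightarrow> 0 \<in> H \<Longrightarrow> \<chi> 0 = 1"
proof -
  assume c: "chr H \<chi>" and z: "0 \<in> H"
  have "\<chi> 0 = \<chi> 0 * \<chi> 0" using c z unfolding chr_def by (metis add_0)
  moreover have "\<chi> 0 \<noteq> 0" using c z unfolding chr_def by force
  ultimately show ?thesis by (metis mult_cancel_left1)
qed

lemma chr_nmul: "chr H \<chi> \<Longrightarrow> sgrp H \<Longrightarrow> y \<in> H \<Longrightarrow> \<chi> (nmul q y) = \<chi> y ^ q"
proof (induct q)
  case 0 then show ?case using chr_zero[of H \<chi>] by (simp add: sgrp_def)
next
  case (Suc q)
  have "nmul q y \<in> H" using nmul_mem Suc by blast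
  then show ?case using Suc unfolding chr_def by simp
qed

lemma root_ex:
  assumes k: "k \<ge> 2" and z: "norm z = 1"
  shows "\<exists>w::complex. w ^ k = z \<and> norm w = 1 \<and> w \<noteq> 1"
proof -
  define w0 where "w0 = cis (Arg z / real k)"
  have zc: "z = cis (Arg z)" using rcis_cmod_Arg[of z] z by (simp add: rcis_def)
  have w0k: "w0 ^ k = z" using k zc by (simp add: w0_def DeMoivre)
  define \<zeta> where "\<zeta> = cis (2 * pi * real 1 / real k)"
  have bij: "bij_betw (\<lambda>j. cis (2 * pi * real j / real k)) {..<k} {z. z ^ k = 1}"
    using k by (intro bij_betw_roots_unity) simp
  have inj: "inj_on (\<lambda>j. cis (2 * pi * real j / real k)) {..<k}"
    using bij unfolding bij_betw_def by blast
  have "\<zeta> \<noteq> cis (2 * pi * real 0 / real k)"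
    unfolding \<zeta>_def using inj_on_contraD[OF inj, of 1 0] k by simp
  then have zne: "\<zeta> \<noteq> 1" by simp
  have "\<zeta> \<in> (\<lambda>j. cis (2 * pi * real j / real k)) ` {..<k}"
    unfolding \<zeta>_def using k by (intro image_eqI[of _ _ 1]) auto
  then have zk: "\<zeta> ^ k = 1" using bij unfolding bij_betw_def by blast
  show ?thesis
  proof (cases "w0 = 1")
    case True
    then show ?thesis using zne zk w0k
      by (intro exI[of _ "w0 * \<zeta>"]) (simp add: power_mult_distrib \<zeta>_def w0_def)
  next
    case False
    then show ?thesis using w0k by (intro exI[of _ w0]) (simp add: w0_def)
  qed
qed

lemma ext_step:
  assumes fin: "finite S" and sS: "sgrp S" and sH: "sgrp H" and HS: "H \<subseteq> S"
    and ch: "chr H \<chi>" and cS: "c \<in> S" and cH: "c \<notin> H"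
  shows "\<exists>H' \<chi>'. sgrp H' \<and> H \<subseteq> H' \<and> H' \<subseteq> S \<and> c \<in> H' \<and> chr H' \<chi>'
           \<and> (\<forall>x\<in>H. \<chi>' x = \<chi> x) \<and> \<chi>' c \<noteq> 1"
proof -
  obtain n where n: "n > 0" "nmul n c = 0" using order_ex[OF fin sS cS] by blast
  have H0: "0 \<in> H" and Hadd: "\<And>x y. x \<in> H \<Longrightarrow> y \<in> H \<Longrightarrow> x + y \<in> H"
    and Hneg: "\<And>x. x \<in> H \<Longrightarrow> - x \<in> H" using sH unfolding sgrp_def by auto
  have chm: "\<And>x y. x \<in> H \<Longrightarrow> y \<in> H \<Longrightarrow> \<chi> (x + y) = \<chi> x * \<chi> y"
    and chn: "\<And>x. x \<in> H \<Longrightarrow> norm (\<chi> x) = 1" using ch unfolding chr_def by auto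
  define k where "k = (LEAST k. 0 < k \<and> nmul k c \<in> H)"
  have ex: "0 < n \<and> nmul n c \<in> H" using n H0 by simp
  have kH: "0 < k \<and> nmul k c \<in> H" unfolding k_def by (rule LeastI[of _ n], rule ex)
  have kmin: "\<And>r. 0 < r \<Longrightarrow> r < k \<Longrightarrow> nmul r c \<notin> H"
    unfolding k_def using not_less_Least by blast
  have "k \<noteq> 1" using kH cH by auto
  then have k2: "k \<ge> 2" using kH by linarith
  have "norm (\<chi> (nmul k c)) = 1" using chn kH by blast
  then obtain w where w: "w ^ k = \<chi> (nmul k c)" "norm w = 1" "w \<noteq> 1"
    using root_ex[OF k2] by blast
  have dvd: "k dvd d" if "nmul d c \<in> H" for d
  proof -
    have e: "nmul d c = nmul (d div k * k) c + nmul (d mod k) c"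
      by (metis div_mult_mod_eq nmul_add)
    have "nmul (d div k * k) c \<in> H" using nmul_mult nmul_mem[OF sH] kH by metis
    then have "nmul (d mod k) c \<in> H" using e that sgrp_diff[OF sH] by (metis add_diff_cancel_left')
    then have "d mod k = 0" using kmin[of "d mod k"] kH by (meson mod_less_divisor neq0_conv)
    then show ?thesis by auto
  qed
  have keychi: "\<chi> (nmul d c) = w ^ d" if dH0: "nmul d c \<in> H" for d
  proof -
    obtain q where q: "d = q * k" using dvd[OF dH0] by (metis dvd_def mult.commute)
    have "\<chi> (nmul d c) = \<chi> (nmul q (nmul k c))" using q nmul_mult by metis
    also have "\<dots> = \<chi> (nmul k c) ^ q" using chr_nmul[OF ch sH] kH by blast

    also have "\<dots> = w ^ d" using q w(1) by (simp add: power_mult mult.commute)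
    finally show ?thesis .
  qed
  have wd1: "\<chi> h * w ^ j = \<chi> h' * w ^ j'"
    if "h \<in> H" "h' \<in> H" "h + nmul j c = h' + nmul j' c" "j' \<le> j" for h h' j j'
  proof -
    define d where "d = j - j'"
    have jd: "j = d + j'" using that d_def by simp
    have "h + nmul d c = h'" using that(3) unfolding jd nmul_add
      by (metis add.assoc add_right_cancel)
    then have dh: "nmul d c = h' - h" by (metis add_diff_cancel_left')
    then have dH: "nmul d c \<in> H" using sgrp_diff[OF sH] that by simp
    have "\<chi> h' = \<chi> h * \<chi> (nmul d c)"
      using chm[OF that(1) dH] \<open>h + nmul d c = h'\<close> by simp
    then have "\<chi> h' = \<chi> h * w ^ d" using keychi[OF dH] by simp
    then show ?thesis by (simp add: jd power_add)
  qed
  have wd: "\<chi> h * w ^ j = \<chi> h' * w ^ j'"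
    if "h \<in> H" "h' \<in> H" "h + nmul j c = h' + nmul j' c" for h h' j j'
    using wd1[OF that] wd1[OF that(2,1) that(3)[symmetric]] by (cases "j' \<le> j") auto
  define H' where "H' = {h + nmul j c | h j. h \<in> H}"
  define \<chi>' where "\<chi>' x = (SOME v. \<exists>h j. h \<in> H \<and> x = h + nmul j c \<and> v = \<chi> h * w ^ j)" for x
  have chi'_eq: "\<chi>' (h + nmul j c) = \<chi> h * w ^ j" if "h \<in> H" for h j
  proof -
    have "\<exists>h1 j1. h1 \<in> H \<and> h + nmul j c = h1 + nmul j1 c \<and> \<chi>' (h + nmul j c) = \<chi> h1 * w ^ j1"
      unfolding \<chi>'_def by (rule someI_ex) (use that in blast)
    then show ?thesis using wd that by metis
  qed
  have negc: "- nmul j c = nmul ((n - 1) * j) c" for j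
  proof -
    have "nmul ((n - 1) * j) c + nmul j c = nmul (j * n) c"
      using n(1) by (metis Suc_diff_1 mult.commute mult_Suc nmul_add add.commute)
    also have "\<dots> = 0" using n(2) by (simp add: nmul_mult)
    finally have "nmul j c + nmul ((n - 1) * j) c = 0" by (simp add: add.commute)
    then show ?thesis by (rule add.inverse_unique)
  qed
  have sH': "sgrp H'" unfolding sgrp_def H'_def
  proof (intro conjI ballI)
    show "0 \<in> {h + nmul j c |h j. h \<in> H}" using H0 by (intro CollectI exI[of _ 0]) auto
  next
    fix x y assume "x \<in> {h + nmul j c |h j. h \<in> H}" "y \<in> {h + nmul j c |h j. h \<in> H}"
    then obtain h1 j1 h2 j2 where "x = h1 + nmul j1 c" "y = h2 + nmul j2 c" "h1 \<in> H" "h2 \<in> H" by blast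
    then show "x + y \<in> {h + nmul j c |h j. h \<in> H}"
      by (intro CollectI exI[of _ "h1 + h2"] exI[of _ "j1 + j2"]) (auto simp: nmul_add algebra_simps Hadd)
  next
    fix x assume "x \<in> {h + nmul j c |h j. h \<in> H}"
    then obtain h1 j1 where "x = h1 + nmul j1 c" "h1 \<in> H" by blast
    then show "- x \<in> {h + nmul j c |h j. h \<in> H}"
      by (intro CollectI exI[of _ "- h1"] exI[of _ "(n - 1) * j1"]) (use negc[of j1] in \<open>auto simp: Hneg\<close>)
  qed
  have HH': "H \<subseteq> H'" unfolding H'_def by (force intro: exI[of _ 0])
  have H'S: "H' \<subseteq> S" unfolding H'_def using HS nmul_mem[OF sS cS] sS unfolding sgrp_def by blast
  have cH': "c \<in> H'" unfolding H'_def using H0 by (force intro: exI[of _ 1])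
  have chr': "chr H' \<chi>'" unfolding chr_def
  proof (intro conjI ballI)
    fix x y assume "x \<in> H'" "y \<in> H'"
    then obtain h1 j1 h2 j2 where xy: "x = h1 + nmul j1 c" "y = h2 + nmul j2 c" "h1 \<in> H" "h2 \<in> H"
      unfolding H'_def by blast
    have e: "x + y = (h1 + h2) + nmul (j1 + j2) c" using xy by (simp add: nmul_add algebra_simps)
    have "\<chi>' (x + y) = \<chi> (h1 + h2) * w ^ (j1 + j2)" unfolding e by (rule chi'_eq[OF Hadd[OF xy(3,4)]])
    also have "\<dots> = (\<chi> h1 * w ^ j1) * (\<chi> h2 * w ^ j2)" using chm xy by (simp add: power_add)
    finally show "\<chi>' (x + y) = \<chi>' x * \<chi>' y" using xy chi'_eq by simp
  next
    fix x assume "x \<in> H'"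
    then obtain h1 j1 where "x = h1 + nmul j1 c" "h1 \<in> H" unfolding H'_def by blast
    then show "norm (\<chi>' x) = 1" using chi'_eq chn w(2) by (simp add: norm_mult norm_power)
  qed
  have ext: "\<forall>x\<in>H. \<chi>' x = \<chi> x" using chi'_eq[of _ 0] by simp
  have "\<chi>' c = \<chi> 0 * w" using chi'_eq[OF H0, of 1] by simp
  then have "\<chi>' c = w" using chr_zero[OF ch H0] by simp
  then show ?thesis using sH' HH' H'S cH' chr' ext w(3) by blast
qed

lemma ext_full:
  assumes fin: "finite S" and sS: "sgrp S"
  shows "sgrp H \<Longrightarrow> H \<subseteq> S \<Longrightarrow> chr H \<chi> \<Longrightarrow> \<exists>\<chi>'. chr S \<chi>' \<and> (\<forall>x\<in>H. \<chi>' x = \<chi> x)"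
proof (induction "card (S - H)" arbitrary: H \<chi> rule: less_induct)
  case less
  show ?case
  proof (cases "H = S")
    case True then show ?thesis using less by blast
  next
    case False
    then obtain c where c: "c \<in> S" "c \<notin> H" using less by blast
    obtain H' \<chi>1 where h: "sgrp H'" "H \<subseteq> H'" "H' \<subseteq> S" "c \<in> H'" "chr H' \<chi>1"
      "\<forall>x\<in>H. \<chi>1 x = \<chi> x"
      using ext_step[OF fin sS less(2,3,4) c] by blast
    have "S - H' \<subset> S - H" using h c by blast
    then have "card (S - H') < card (S - H)" using fin by (meson finite_Diff psubset_card_mono)
    from less(1)[OF this h(1,3,5)] obtain \<chi>2 where "chr S \<chi>2" "\<forall>x\<in>H'. \<chi>2 x = \<chi>1 x" by blast
    then show ?thesis using h by (intro exI[of _ \<chi>2]) auto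
  qed
qed

lemma separate:
  assumes fin: "finite S" and sS: "sgrp S" and sB: "sgrp B" and BS: "B \<subseteq> S"
    and a: "a \<in> S" "a \<notin> B"
  shows "\<exists>\<psi>. chr S \<psi> \<and> (\<forall>b\<in>B. \<psi> b = 1) \<and> \<psi> a \<noteq> 1"
proof -
  have "chr B (\<lambda>_. 1)" unfolding chr_def by simp
  from ext_step[OF fin sS sB BS this a] obtain H' \<chi>1 where
    h: "sgrp H'" "B \<subseteq> H'" "H' \<subseteq> S" "a \<in> H'" "chr H' \<chi>1" "\<forall>x\<in>B. \<chi>1 x = 1" "\<chi>1 a \<noteq> 1"
    by blast
  from ext_full[OF fin sS h(1,3,5)] obtain \<psi> where "chr S \<psi>" "\<forall>x\<in>H'. \<psi> x = \<chi>1 x" by blast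
  then show ?thesis using h by (intro exI[of _ \<psi>]) auto
qed



lemma cadd_eq: "cadd f t = f + t"
  by (simp add: cadd_def fun_eq_iff)

lemma csub_eq: "csub f t = f - t"
  by (simp add: csub_def fun_eq_iff)

lemma cochains_finite:
  fixes K :: "int \<Rightarrow> 'c set" and G :: "int \<Rightarrow> 'g::zero set"
  assumes "\<And>n. finite (K n)" "finite {n. K n \<noteq> {}}" "\<And>n. finite (G n)"
  shows "finite (cochains K G p)"
proof -
  define Sig where "Sig = Sigma {n. K n \<noteq> {}} K"
  have fS: "finite Sig" unfolding Sig_def using assms by (intro finite_SigmaI) auto
  have inj: "inj_on (\<lambda>f. restrict (\<lambda>(n, x). f n x) Sig) (cochains K G p)"
  proof (rule inj_onI)
    fix f g assume f: "f \<in> cochains K G p" and g: "g \<in> cochains K G p" and e: "restrict (\<lambda>(n, x). f n x) Sig = restrict (\<lambda>(n, x). g n x) Sig"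
    show "f = g"
    proof (rule ext, rule ext)
      fix n x
      show "f n x = g n x"
      proof (cases "x \<in> K n")
        case True
        then have "(n, x) \<in> Sig" unfolding Sig_def by auto
        have "restrict (\<lambda>(n, x). f n x) Sig (n, x) = restrict (\<lambda>(n, x). g n x) Sig (n, x)"
          using e by simp
        then show ?thesis using \<open>(n, x) \<in> Sig\<close> by simp
      next
        case False
        then show ?thesis using f g unfolding cochains_def by auto
      qed
    qed
  qed
  have "(\<lambda>f. restrict (\<lambda>(n, x). f n x) Sig) ` cochains K G p \<subseteq> PiE Sig (\<lambda>(n, x). G (n - p))"
  proof (rule image_subsetI)
    fix f assume "f \<in> cochains K G p"
    then have "\<forall>n x. x \<in> K n \<longrightarrow> f n x \<in> G (n - p)" unfolding cochains_def by blast
    then show "restrict (\<lambda>(n, x). f n x) Sig \<in> PiE Sig (\<lambda>(n, x). G (n - p))"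
      unfolding Sig_def by (auto simp: PiE_iff)
  qed
  moreover have "finite (PiE Sig (\<lambda>(n, x). G (n - p)))"
    using fS assms(3) by (intro finite_PiE) auto
  ultimately have "finite ((\<lambda>f. restrict (\<lambda>(n, x). f n x) Sig) ` cochains K G p)" by (rule finite_subset)
  then show ?thesis using inj by (rule finite_imageD)
qed

lemma cochains_sgrp:
  assumes "\<And>n. 0 \<in> G n" "\<And>n a b. a \<in> G n \<Longrightarrow> b \<in> G n \<Longrightarrow> a + b \<in> G n"
    "\<And>n a. a \<in> G n \<Longrightarrow> - a \<in> G n"
  shows "sgrp (cochains K G p)"
  using assms unfolding sgrp_def cochains_def by auto

lemma zmul_plus: "zmul k (a + b) = zmul k a + zmul k b"
  by (simp add: zmul_def nmul_plus)

lemma zmul_zero[simp]: "zmul k 0 = 0"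
  by (simp add: zmul_def)

lemma zmul_mem: "sgrp H \<Longrightarrow> a \<in> H \<Longrightarrow> zmul k a \<in> H"
  unfolding zmul_def using nmul_mem by (auto simp: sgrp_def)

lemma sum_mem:
  assumes "sgrp H"
  shows "finite A \<Longrightarrow> (\<And>y. y \<in> A \<Longrightarrow> f y \<in> H) \<Longrightarrow> sum f A \<in> H"
  by (induct A rule: finite_induct) (use assms in \<open>auto simp: sgrp_def\<close>)

lemma dG_zero:
  fixes G :: "int \<Rightarrow> 'g::ab_group_add set" and dG :: "int \<Rightarrow> 'g \<Rightarrow> 'g"
  assumes "\<And>n a b. a \<in> G n \<Longrightarrow> b \<in> G n \<Longrightarrow> dG n (a + b) = dG n a + dG n b" "0 \<in> G m"
  shows "dG m 0 = 0"
  using assms(1)[OF assms(2) assms(2)] by simp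

lemma delta_add:
  assumes dG_add: "\<And>n a b. a \<in> G n \<Longrightarrow> b \<in> G n \<Longrightarrow> dG n (a + b) = dG n a + dG n b"
    and f: "f \<in> cochains K G p" and g: "g \<in> cochains K G p"
  shows "delta K dC dG p (f + g) = delta K dC dG p f + delta K dC dG p g"
proof (rule ext, rule ext)
  fix n x
  show "delta K dC dG p (f + g) n x = (delta K dC dG p f + delta K dC dG p g) n x"
  proof (cases "x \<in> K n")
    case True
    then have "f n x \<in> G (n - p)" "g n x \<in> G (n - p)" using f g unfolding cochains_def by auto
    then show ?thesis using True
      by (simp add: delta_def zmul_plus sum.distrib dG_add algebra_simps)
  qed (simp add: delta_def)
qed

lemma delta_zero:
  assumes "\<And>n a b. a \<in> G n \<Longrightarrow> b \<in> G n \<Longrightarrow> dG n (a + b) = dG n a + dG n b" "\<And>n. 0 \<in> G n"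
  shows "delta K dC dG p 0 = 0"
  using dG_zero[of G dG, OF assms(1) assms(2)] by (simp add: delta_def fun_eq_iff)

lemma delta_neg:
  assumes "\<And>n a b. a \<in> G n \<Longrightarrow> b \<in> G n \<Longrightarrow> dG n (a + b) = dG n a + dG n b" "\<And>n. 0 \<in> G n"
    "\<And>n a. a \<in> G n \<Longrightarrow> - a \<in> G n"
    and f: "f \<in> cochains K G p"
  shows "delta K dC dG p (- f) = - delta K dC dG p f"
proof -
  have nf: "- f \<in> cochains K G p" using f assms(3) unfolding cochains_def by auto
  have "delta K dC dG p f + delta K dC dG p (- f) = delta K dC dG p (f + - f)"
    using delta_add[of G dG, OF assms(1) f nf] by simp
  also have "\<dots> = 0" using delta_zero[of G dG, OF assms(1,2)] by simp
  finally show ?thesis by (metis add.inverse_unique)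
qed

lemma delta_mem:
  assumes K_fin: "\<And>n. finite (K n)" and G0: "\<And>n. 0 \<in> G n"
    and Gadd: "\<And>n a b. a \<in> G n \<Longrightarrow> b \<in> G n \<Longrightarrow> a + b \<in> G n"
    and Gneg: "\<And>n a. a \<in> G n \<Longrightarrow> - a \<in> G n"
    and dG_maps: "\<And>n a. a \<in> G n \<Longrightarrow> dG n a \<in> G (n - 1)"
    and t: "t \<in> cochains K G (-1)"
  shows "delta K dC dG (-1) t \<in> cochains K G 0"
proof -
  have sG: "sgrp (G n)" for n using G0 Gadd Gneg unfolding sgrp_def by auto
  have "delta K dC dG (-1) t n x \<in> G n" if x: "x \<in> K n" for n x
  proof -
    have "(\<Sum>y\<in>K (n - 1). zmul (dC n x y) (t (n - 1) y)) \<in> G n"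
    proof (rule sum_mem[OF sG K_fin])
      fix y assume "y \<in> K (n - 1)"
      then have "t (n - 1) y \<in> G n" using t unfolding cochains_def by force
      then show "zmul (dC n x y) (t (n - 1) y) \<in> G n" using zmul_mem[OF sG] by blast
    qed
    moreover have "t n x \<in> G (n + 1)" using t x unfolding cochains_def by force
    then have "dG (n + 1) (t n x) \<in> G n" using dG_maps by force
    ultimately show ?thesis using x Gadd by (simp add: delta_def)
  qed
  then show ?thesis unfolding cochains_def by (auto simp: delta_def)
qed



theorem proposition8:
  fixes K :: "int \<Rightarrow> 'c set" and dC :: "int \<Rightarrow> 'c \<Rightarrow> 'c \<Rightarrow> int"
    and G :: "int \<Rightarrow> 'g::ab_group_add set" and dG :: "int \<Rightarrow> 'g \<Rightarrow> 'g"
    and mrho :: "(('c, 'g) cochain set \<Rightarrow> complex) \<Rightarrow> ('c, 'g) cochain \<Rightarrow> complex"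
    and f g :: "('c, 'g) cochain"
  assumes K_fin: "\<And>n. finite (K n)"
    and K_supp: "finite {n. K n \<noteq> {}}"
    and C_chain: "\<And>n x z. x \<in> K n \<Longrightarrow> z \<in> K (n - 2) \<Longrightarrow>
                    (\<Sum>y\<in>K (n - 1). dC n x y * dC (n - 1) y z) = 0"
    and G_fin: "\<And>n. finite (G n)"
    and G_zero: "\<And>n. 0 \<in> G n"
    and G_add: "\<And>n a b. a \<in> G n \<Longrightarrow> b \<in> G n \<Longrightarrow> a + b \<in> G n"
    and G_uminus: "\<And>n a. a \<in> G n \<Longrightarrow> - a \<in> G n"
    and dG_maps: "\<And>n a. a \<in> G n \<Longrightarrow> dG n a \<in> G (n - 1)"
    and dG_add: "\<And>n a b. a \<in> G n \<Longrightarrow> b \<in> G n \<Longrightarrow> dG n (a + b) = dG n a + dG n b"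
    and G_chain: "\<And>n a. a \<in> G n \<Longrightarrow> dG (n - 1) (dG n a) = 0"
    and mrho: "\<And>\<rho>. \<rho> \<in> H0_chars K dC G dG \<Longrightarrow>
                 mrho \<rho> \<in> hom0_chars K G
               \<and> (\<forall>t\<in>cochains K G (-1). mrho \<rho> (delta K dC dG (-1) t) = 1)
               \<and> (\<forall>h\<in>cocycles0 K dC G dG. mrho \<rho> h = \<rho> (cls K dC G dG h))"
    and f: "f \<in> cocycles0 K dC G dG"
    and g: "g \<in> cocycles0 K dC G dG"
  shows "Qclass K dC G dG mrho f (A0 K dC G dG (ket g))
       = (\<lambda>h. (if cls K dC G dG f = cls K dC G dG g then 1 else 0) * A0 K dC G dG (ket g) h)"
proof -
  define Z where "Z = cocycles0 K dC G dG"
  define Bd where "Bd = coboundaries0 K dC G dG"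
  define ch where "ch = H0_chars K dC G dG"
  define cl where "cl = cls K dC G dG"
  define HH where "HH = H0 K dC G dG"
  define C0 where "C0 = cochains K G 0"
  define Cm where "Cm = cochains K G (-1)"
  have sC: "sgrp (cochains K G p)" for p by (rule cochains_sgrp[OF G_zero G_add G_uminus])
  have fC: "finite (cochains K G p)" for p by (rule cochains_finite[OF K_fin K_supp G_fin])
  have dmem: "delta K dC dG (-1) t \<in> C0" if "t \<in> Cm" for t
    using delta_mem[of K G dG, OF K_fin G_zero G_add G_uminus dG_maps] that unfolding C0_def Cm_def by blast
  have dadd: "delta K dC dG p (a + b) = delta K dC dG p a + delta K dC dG p b"
    if "a \<in> cochains K G p" "b \<in> cochains K G p" for a b p
    using delta_add[of G dG, OF dG_add that] .
  have dneg: "delta K dC dG p (- a) = - delta K dC dG p a" if "a \<in> cochains K G p" for a p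
    using delta_neg[of G dG, OF dG_add G_zero G_uminus that] .
  have dzero: "delta K dC dG p 0 = 0" for p
    using delta_zero[of G dG, OF dG_add G_zero] .
  have z0: "(\<lambda>n x. 0) = (0 :: ('c, 'g) cochain)" by (simp add: fun_eq_iff)
  have Zalt: "Z = {a \<in> C0. delta K dC dG 0 a = 0}" unfolding Z_def cocycles0_def C0_def z0 ..
  have ZC: "Z \<subseteq> C0" unfolding Zalt by blast
  have sC0: "sgrp C0" unfolding C0_def by (rule sC)
  have sZ: "sgrp Z" unfolding sgrp_def Zalt
    using sC0 dadd[of _ 0] dneg[of _ 0] dzero[of 0] unfolding sgrp_def C0_def by auto
  have fZ: "finite Z" using ZC fC[of 0] unfolding C0_def by (rule finite_subset)
  have Balt: "Bd = delta K dC dG (-1) ` Cm" unfolding Bd_def coboundaries0_def Cm_def ..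
  have sCm: "sgrp Cm" unfolding Cm_def by (rule sC)
  have sB: "sgrp Bd" unfolding sgrp_def Balt
  proof (intro conjI ballI)
    show "0 \<in> delta K dC dG (- 1) ` Cm" using sCm dzero unfolding sgrp_def by force
  next
    fix x y assume "x \<in> delta K dC dG (- 1) ` Cm" "y \<in> delta K dC dG (- 1) ` Cm"
    then obtain a b where "a \<in> Cm" "b \<in> Cm" "x = delta K dC dG (- 1) a" "y = delta K dC dG (- 1) b"
      by blast
    then show "x + y \<in> delta K dC dG (- 1) ` Cm"
      using dadd[of a "-1" b] sCm unfolding Cm_def sgrp_def by (metis image_eqI)
  next
    fix x assume "x \<in> delta K dC dG (- 1) ` Cm"
    then obtain a where "a \<in> Cm" "x = delta K dC dG (- 1) a" by blast
    then show "- x \<in> delta K dC dG (- 1) ` Cm"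
      using dneg[of a "-1"] sCm unfolding Cm_def sgrp_def by (metis image_eqI)
  qed
  have B0: "0 \<in> Bd" using sB unfolding sgrp_def by blast
  have clalt: "cl a = {a + b | b. b \<in> Bd}" for a
    unfolding cl_def cls_def Bd_def cadd_eq ..
  have cl_eq: "cl a = cl a' \<longleftrightarrow> a' - a \<in> Bd" for a a'
  proof
    assume "cl a = cl a'"
    then have "a' \<in> cl a" using B0 unfolding clalt by force
    then show "a' - a \<in> Bd" unfolding clalt by auto
  next
    assume d: "a' - a \<in> Bd"
    show "cl a = cl a'"
    proof
      show "cl a \<subseteq> cl a'"
      proof
        fix x assume "x \<in> cl a"
        then obtain b where b: "b \<in> Bd" "x = a + b" unfolding clalt by blast
        then have "b - (a' - a) \<in> Bd" using sgrp_diff[OF sB] d by blast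
        moreover have "x = a' + (b - (a' - a))" using b by simp
        ultimately show "x \<in> cl a'" unfolding clalt by blast
      qed
    next
      show "cl a' \<subseteq> cl a"
      proof
        fix x assume "x \<in> cl a'"
        then obtain b where b: "b \<in> Bd" "x = a' + b" unfolding clalt by blast
        then have "(a' - a) + b \<in> Bd" using sB d unfolding sgrp_def by blast
        moreover have "x = a + ((a' - a) + b)" using b by simp
        ultimately show "x \<in> cl a" unfolding clalt by blast
      qed
    qed
  qed
  have HHalt: "HH = cl ` Z" unfolding HH_def H0_def cl_def Z_def ..
  have chalt: "ch = {\<rho>. (\<forall>X. X \<notin> HH \<longrightarrow> \<rho> X = 0)
     \<and> (\<forall>a\<in>Z. \<forall>b\<in>Z. \<rho> (cl (a + b)) = \<rho> (cl a) * \<rho> (cl b))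
     \<and> (\<forall>a\<in>Z. norm (\<rho> (cl a)) = 1)}"
    unfolding ch_def H0_chars_def HH_def cl_def Z_def cadd_eq ..
  have chr_of: "chr Z (\<lambda>a. \<rho> (cl a))" if "\<rho> \<in> ch" for \<rho>
    using that unfolding chalt chr_def by blast
  have Zf: "f \<in> Z" and Zg: "g \<in> Z" using f g unfolding Z_def by auto
  have Zadd: "a + b \<in> Z" if "a \<in> Z" "b \<in> Z" for a b using sZ that unfolding sgrp_def by blast
  have Zdiff: "a - b \<in> Z" if "a \<in> Z" "b \<in> Z" for a b using sgrp_diff[OF sZ] that by blast
  have Z0: "0 \<in> Z" using sZ unfolding sgrp_def by blast
  define N where "N a = (SOME n. n > 0 \<and> nmul n a = 0)" for a :: "('c, 'g) cochain"
  have N: "N a > 0 \<and> nmul (N a) a = 0" if "a \<in> Z" for a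
    unfolding N_def by (rule someI_ex) (use order_ex[OF fZ sZ that] in blast)
  define V where "V = (\<Union>a\<in>Z. {z::complex. z ^ N a = 1})"
  have fV: "finite V" unfolding V_def using fZ N
    by (intro finite_UN_I) (auto intro!: finite_roots_unity simp: Suc_le_eq)
  have valV: "\<rho> X \<in> V" if rX: "\<rho> \<in> ch" "X \<in> HH" for \<rho> X
  proof -
    obtain a where a: "a \<in> Z" "X = cl a" using rX(2) unfolding HHalt by blast
    have "\<rho> (cl (nmul (N a) a)) = \<rho> (cl a) ^ N a"
      using chr_nmul[OF chr_of[OF rX(1)] sZ a(1)] .
    moreover have "\<rho> (cl 0) = 1" using chr_zero[OF chr_of[OF rX(1)] Z0] .
    ultimately have "\<rho> X ^ N a = 1" using N[OF a(1)] a by simp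
    then show ?thesis unfolding V_def using a by blast
  qed
  have fHH: "finite HH" unfolding HHalt using fZ by simp
  have fch: "finite ch"
  proof -
    have inj: "inj_on (\<lambda>\<rho>. restrict \<rho> HH) ch"
    proof (rule inj_onI)
      fix \<rho>1 \<rho>2 assume r: "\<rho>1 \<in> ch" "\<rho>2 \<in> ch" "restrict \<rho>1 HH = restrict \<rho>2 HH"
      show "\<rho>1 = \<rho>2"
      proof
        fix X show "\<rho>1 X = \<rho>2 X"
        proof (cases "X \<in> HH")
          case True
          then show ?thesis using fun_cong[OF r(3), of X] by simp
        next
          case False
          then show ?thesis using r(1,2) unfolding chalt by auto
        qed
      qed
    qed
    have "(\<lambda>\<rho>. restrict \<rho> HH) ` ch \<subseteq> PiE HH (\<lambda>_. V)"
      using valV by (auto simp: PiE_iff)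
    moreover have "finite (PiE HH (\<lambda>_. V))" using fHH fV by (intro finite_PiE) auto
    ultimately have "finite ((\<lambda>\<rho>. restrict \<rho> HH) ` ch)" by (rule finite_subset)
    then show ?thesis using inj by (rule finite_imageD)
  qed
  have triv: "(\<lambda>X. if X \<in> HH then 1 else 0) \<in> ch"
    unfolding chalt HHalt using Zadd by auto
  have chne: "card ch \<noteq> 0" using fch triv by auto
  have sep: "\<exists>\<rho>0\<in>ch. \<rho>0 (cl f) \<noteq> \<rho>0 (cl g)" if ne: "cl f \<noteq> cl g"
  proof -
    have sB': "sgrp (Z \<inter> Bd)" using sZ sB unfolding sgrp_def by auto
    have gf: "g - f \<in> Z" "g - f \<notin> Z \<inter> Bd" using Zdiff[OF Zg Zf] ne cl_eq by auto
    obtain \<psi> where psi: "chr Z \<psi>" "\<forall>b\<in>Z \<inter> Bd. \<psi> b = 1" "\<psi> (g - f) \<noteq> 1"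
      using separate[OF fZ sZ sB' _ gf] by blast
    have pm: "\<psi> (x + y) = \<psi> x * \<psi> y" "norm (\<psi> x) = 1" if "x \<in> Z" "y \<in> Z" for x y
      using psi(1) that unfolding chr_def by auto
    define \<rho>0 where "\<rho>0 X = (if X \<in> HH then \<psi> (SOME a. a \<in> Z \<and> X = cl a) else 0)" for X
    have r0: "\<rho>0 (cl a) = \<psi> a" if a: "a \<in> Z" for a
    proof -
      have inH: "cl a \<in> HH" unfolding HHalt using a by blast
      define a' where "a' = (SOME a'. a' \<in> Z \<and> cl a = cl a')"
      have ex: "\<exists>a'. a' \<in> Z \<and> cl a = cl a'" using a by blast
      have a': "a' \<in> Z \<and> cl a = cl a'" unfolding a'_def using someI_ex[OF ex] .
      then have d: "a - a' \<in> Z \<inter> Bd" using cl_eq[of a' a] Zdiff a by auto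
      have "\<psi> a = \<psi> (a' + (a - a'))" by simp
      also have "\<dots> = \<psi> a' * \<psi> (a - a')" using pm a' d by blast
      also have "\<dots> = \<psi> a'" using psi(2) d by simp
      finally show ?thesis unfolding \<rho>0_def a'_def using inH by simp
    qed
    have "\<rho>0 \<in> ch" unfolding chalt
    proof (intro CollectI conjI allI ballI impI)
      fix X assume "X \<notin> HH" then show "\<rho>0 X = 0" unfolding \<rho>0_def by simp
    next
      fix a b assume "a \<in> Z" "b \<in> Z"
      then show "\<rho>0 (cl (a + b)) = \<rho>0 (cl a) * \<rho>0 (cl b)" using r0 Zadd pm by simp
    next
      fix a assume "a \<in> Z" then show "norm (\<rho>0 (cl a)) = 1" using r0 pm by simp
    qed
    moreover have "\<rho>0 (cl f) \<noteq> \<rho>0 (cl g)"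
    proof
      assume e: "\<rho>0 (cl f) = \<rho>0 (cl g)"
      have "\<psi> g = \<psi> (f + (g - f))" by simp
      also have "\<dots> = \<psi> f * \<psi> (g - f)" using pm Zf gf(1) by blast
      finally have "\<psi> f = \<psi> f * \<psi> (g - f)" using e r0 Zf Zg by simp
      moreover have "\<psi> f \<noteq> 0" using pm(2)[OF Zf Zf] by auto
      ultimately show False using psi(3) by simp
    qed
    ultimately show ?thesis by blast
  qed
  have orth: "(\<Sum>\<rho>\<in>ch. cnj (\<rho> (cl f)) * \<rho> (cl g)) = (if cl f = cl g then of_nat (card ch) else 0)"
  proof (cases "cl f = cl g")
    case True
    have "cnj (\<rho> (cl g)) * \<rho> (cl g) = 1" if "\<rho> \<in> ch" for \<rho>
    proof -
      have "norm (\<rho> (cl g)) = 1" using that Zg unfolding chalt by blast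
      then show ?thesis by (metis complex_norm_square mult.commute of_real_1 power_one)
    qed
    then show ?thesis using True by simp
  next
    case False
    obtain \<rho>0 where r0: "\<rho>0 \<in> ch" "\<rho>0 (cl f) \<noteq> \<rho>0 (cl g)" using sep[OF False] by blast
    define \<sigma> where "\<sigma> \<rho> = (\<lambda>X. \<rho>0 X * \<rho> X)" for \<rho> :: "('c, 'g) cochain set \<Rightarrow> complex"
    have r0p: "\<forall>X. X \<notin> HH \<longrightarrow> \<rho>0 X = 0" "\<forall>a\<in>Z. \<forall>b\<in>Z. \<rho>0 (cl (a + b)) = \<rho>0 (cl a) * \<rho>0 (cl b)"
      "\<forall>a\<in>Z. norm (\<rho>0 (cl a)) = 1" using r0(1) unfolding chalt by blast+
    have sig: "\<sigma> ` ch \<subseteq> ch"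
    proof
      fix \<rho>' assume "\<rho>' \<in> \<sigma> ` ch"
      then obtain \<rho> where r: "\<rho> \<in> ch" "\<rho>' = \<sigma> \<rho>" by blast
      have rp: "\<forall>X. X \<notin> HH \<longrightarrow> \<rho> X = 0" "\<forall>a\<in>Z. \<forall>b\<in>Z. \<rho> (cl (a + b)) = \<rho> (cl a) * \<rho> (cl b)"
        "\<forall>a\<in>Z. norm (\<rho> (cl a)) = 1" using r(1) unfolding chalt by blast+
      show "\<rho>' \<in> ch" unfolding chalt r(2) \<sigma>_def
        using r0p rp by (auto simp: norm_mult)
    qed
    have inj: "inj_on \<sigma> ch"
    proof (rule inj_onI)
      fix \<rho>1 \<rho>2 assume r: "\<rho>1 \<in> ch" "\<rho>2 \<in> ch" "\<sigma> \<rho>1 = \<sigma> \<rho>2"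
      show "\<rho>1 = \<rho>2"
      proof
        fix X show "\<rho>1 X = \<rho>2 X"
        proof (cases "X \<in> HH")
          case True
          then obtain a where "a \<in> Z" "X = cl a" unfolding HHalt by blast
          then have "\<rho>0 X \<noteq> 0" using r0p(3) by auto
          then show ?thesis using fun_cong[OF r(3), of X] unfolding \<sigma>_def by simp
        next
          case False
          then show ?thesis using r(1,2) unfolding chalt by auto
        qed
      qed
    qed
    have im: "\<sigma> ` ch = ch" using endo_inj_surj[OF fch sig inj] .
    define T where "T = (\<Sum>\<rho>\<in>ch. cnj (\<rho> (cl f)) * \<rho> (cl g))"
    define u where "u = cnj (\<rho>0 (cl f)) * \<rho>0 (cl g)"
    have "T = (\<Sum>\<rho>\<in>\<sigma> ` ch. cnj (\<rho> (cl f)) * \<rho> (cl g))" unfolding T_def im ..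
    also have "\<dots> = (\<Sum>\<rho>\<in>ch. cnj (\<sigma> \<rho> (cl f)) * \<sigma> \<rho> (cl g))"
      using sum.reindex[OF inj] by simp
    also have "\<dots> = (\<Sum>\<rho>\<in>ch. u * (cnj (\<rho> (cl f)) * \<rho> (cl g)))"
      unfolding \<sigma>_def u_def by (simp add: mult_ac)
    also have "\<dots> = u * T" unfolding T_def by (simp add: sum_distrib_left)
    finally have TT: "T = u * T" .
    have u1: "u \<noteq> 1"
    proof
      assume "u = 1"
      have n1: "norm (\<rho>0 (cl f)) = 1" using r0p(3) Zf by blast
      have "\<rho>0 (cl f) * cnj (\<rho>0 (cl f)) = 1"
        using n1 by (metis complex_norm_square of_real_1 power_one)
      then have "\<rho>0 (cl g) = \<rho>0 (cl f) * u" unfolding u_def by (metis mult.assoc mult_1)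
      then show False using \<open>u = 1\<close> r0(2) by simp
    qed
    have "T = 0" using TT u1 by (metis mult_cancel_right2 mult.commute)
    then show ?thesis using False unfolding T_def by simp
  qed
  show ?thesis
  proof (rule ext)
    fix h
    define \<psi> where "\<psi> = A0 K dC G dG (ket g)"
    have Q: "Qclass K dC G dG mrho f \<psi> h =
        (\<Sum>\<rho>\<in>ch. cnj (\<rho> (cl f)) * (mrho \<rho> h * \<psi> h)) / of_nat (card ch)"
      unfolding Qclass_def Qop_def ch_def cl_def ..
    show "Qclass K dC G dG mrho f (A0 K dC G dG (ket g)) h =
        (if cls K dC G dG f = cls K dC G dG g then 1 else 0) * A0 K dC G dG (ket g) h"
    proof (cases "\<psi> h = 0")
      case True
      then show ?thesis using Q unfolding \<psi>_def by simp
    next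
      case False
      then have "(\<Sum>t\<in>Cm. Pop (delta K dC dG (-1) t) (ket g) h) \<noteq> 0"
        unfolding \<psi>_def A0_def Cm_def by auto
      then obtain t where t: "t \<in> Cm" "Pop (delta K dC dG (-1) t) (ket g) h \<noteq> 0"
        by (rule sum.not_neutral_contains_not_neutral)
      then have "h - delta K dC dG (-1) t = g" unfolding Pop_def ket_def csub_eq by (auto split: if_splits)
      then have h: "h = g + delta K dC dG (-1) t" by (metis diff_add_cancel add.commute)
      have gC: "g \<in> C0" using Zg ZC by blast
      have mr: "mrho \<rho> h = \<rho> (cl g)" if "\<rho> \<in> ch" for \<rho>
      proof -
        have m: "mrho \<rho> \<in> hom0_chars K G"
          "\<forall>t\<in>cochains K G (-1). mrho \<rho> (delta K dC dG (-1) t) = 1"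
          "\<forall>h\<in>cocycles0 K dC G dG. mrho \<rho> h = \<rho> (cls K dC G dG h)"
          using mrho that unfolding ch_def by blast+
        have "mrho \<rho> h = mrho \<rho> g * mrho \<rho> (delta K dC dG (-1) t)"
          using m(1) gC dmem[OF t(1)] unfolding h hom0_chars_def C0_def cadd_eq by blast
        also have "\<dots> = \<rho> (cl g)" using m(2,3) t(1) g unfolding Cm_def cl_def by simp
        finally show ?thesis .
      qed
      have "(\<Sum>\<rho>\<in>ch. cnj (\<rho> (cl f)) * (mrho \<rho> h * \<psi> h))
          = (\<Sum>\<rho>\<in>ch. cnj (\<rho> (cl f)) * \<rho> (cl g)) * \<psi> h"
        unfolding sum_distrib_right by (rule sum.cong) (simp_all add: mr mult_ac)
      then have "Qclass K dC G dG mrho f \<psi> h = (if cl f = cl g then 1 else 0) * \<psi> h"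
        using Q orth chne by simp
      then show ?thesis unfolding \<psi>_def cl_def .
    qed
  qed
qed

end
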